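(* Consider a stochastic non-zero-sum game $(\mathcal{P}^D)$ with a partially nested information structure and its policy-dependent static reduction $(\mathcal{P}^S)$. Then: (i) If a policy $\underline{\gamma}^{D,*}$ is a PL-NE (DM-NE, stationary) for $(\mathcal{P}^D)$, then the policy $\underline{\gamma}^{S,*}$ obtained from it via the policy-dependent static reduction relation is not necessarily a PL-NE (DM-NE, stationary) for $(\mathcal{P}^S)$. (ii) If a policy $\underline{\gamma}^{S,*}$ is a PL-NE (DM-NE, stationary) for $(\mathcal{P}^S)$, then a policy $\underline{\gamma}^{D,*}$ related to it through the policy-dependent static reduction relation is not necessarily a PL-NE (DM-NE, stationary) for $(\mathcal{P}^D)$. (iii) The statement of part (i) remains valid even if, for every fixed $u^D_{\downarrow(i,k)}$, the map $h_{i,k}(\zeta)\mapsto g_{i,k}(h_{i,k}(\zeta),u^D_{\downarrow(i,k)})$ is invertible for all realizations of $\zeta$ (for all $i,k$), each cost $c^i$ is continuously differentiable and jointly convex in all players' actions for every $\omega_0$, and $\underline{\gamma}^{D,*}$ satisfies Condition (C): for all $i\in\mathcal{N}$, $k\in\mathrm{TE}^i$, the composed map $\gamma^D_{i,k}\big(\{g_{j,l}(h_{j,l}(\zeta),u^{\downarrow(j,l)})\}_{(j,l)\in\downarrow(i,k)},\,g_{i,k}(h_{i,k}(\zeta),u^{\downarrow(i,k)})\big)$ is affine in $u^{\downarrow(i,k)}$.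
   Context: Setting: $N$ players, player $i$ consisting of one-shot decision makers DM$^k$, $k\in\mathrm{TE}^i$, acting sequentially; $\zeta=\{\omega_0,\omega_1,\dots,\omega_N\}$ collects all primitive random variables. In $(\mathcal{P}^D)$ (partially nested information structure), DM$^k$ of PL$^i$ observes $y^D_{i,k}=[\,y^D_{\downarrow(i,k)},\ \hat y^D_{i,k}=g_{i,k}(h_{i,k}(\zeta),u^D_{\downarrow(i,k)})\,]$, where $\downarrow(i,k)$ is the set of DMs $(j,l)$ whose actions affect $\hat y^D_{i,k}$ and $y^D_{\downarrow(i,k)}$ are their observations; $g_{i,k},h_{i,k}$ measurable. Costs $J^i(\underline{\gamma}^D)=E[c^i(\omega_0,\gamma^D_1(y^D_1),\dots,\gamma^D_N(y^D_N))]$ with Borel $c^i$. In the policy-dependent static reduction $(\mathcal{P}^S)$ (defined when the invertibility above holds), DMs observe $y^S_{i,k}=[\,y^S_{\downarrow(i,k)},\ \hat y^S_{i,k}=h_{i,k}(\zeta)\,]$ with the same costs, and policies are related by $\gamma^S_{i,k}(y^S_{i,k})=\gamma^D_{i,k}\big(y^D_{\downarrow(i,k)},g_{i,k}(h_{i,k}(\zeta),\gamma^D_{\downarrow(i,k)}(y^D_{\downarrow(i,k)}))\big)$ $P$-a.s. for all $i,k$. Only deterministic (pure) policies are considered. PL-NE: no player can lower its expected cost by unilaterally changing its whole policy; DM-NE: no single DM of a player can lower that player's cost by unilaterally changing its own policy; stationary: for each DM the gradient of the conditional expected cost of its player, given its observation, with respect to its action vanishes at the equilibrium action a.s. *)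

theory Defs
  imports "HOL-Analysis.Analysis" "HOL-Probability.Probability"
begin

text \<open>
  Decision makers (DMs) are indexed by 0..<nDM (acting sequentially in this order);
  pl d is the player a DM belongs to (TE^i = {d<nDM. pl d = i}); dn d is the set
  of DMs whose actions affect the observation component yhat_d.  Actions and
  observation components are real; the primitive random vector zeta is a function
  nat => real with omega_0 = zeta 0, distributed according to a finitely supported
  probability mass function.  An observation of DM d is encoded as a function
  nat => real giving the component yhat_e for every e in the set of DMs whose
  information DM d has (d itself and, recursively, the DMs in dn d), 0 elsewhere.
\<close>

record game =
  nDM  :: nat
  nPL  :: nat
  pl   :: "nat \<Rightarrow> nat"
  dn   :: "nat \<Rightarrow> nat set"
  hh   :: "nat \<Rightarrow> (nat \<Rightarrow> real) \<Rightarrow> real"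
  gg   :: "nat \<Rightarrow> real \<Rightarrow> (nat \<Rightarrow> real) \<Rightarrow> real"
  cc   :: "nat \<Rightarrow> real \<Rightarrow> (nat \<Rightarrow> real) \<Rightarrow> real"
  dist :: "(nat \<Rightarrow> real) pmf"

type_synonym policy = "nat \<Rightarrow> (nat \<Rightarrow> real) \<Rightarrow> real"

definition oset :: "game \<Rightarrow> nat \<Rightarrow> nat set" where
  "oset G d = insert d {e. (e, d) \<in> {(a, b). a \<in> dn G b}\<^sup>+}"

definition well_formed :: "game \<Rightarrow> bool" where
  "well_formed G \<longleftrightarrow>
     finite (set_pmf (dist G)) \<and>
     2 \<le> nPL G \<and>
     (\<forall>d<nDM G. pl G d < nPL G) \<and>
     (\<forall>i<nPL G. \<exists>d<nDM G. pl G d = i) \<and>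
     (\<forall>d<nDM G. dn G d \<subseteq> {..<d}) \<and>
     (\<forall>d<nDM G. \<forall>x u u'. (\<forall>e\<in>dn G d. u e = u' e) \<longrightarrow> gg G d x u = gg G d x u') \<and>
     (\<forall>d<nDM G. \<forall>e\<in>dn G d. \<exists>x u a. gg G d x u \<noteq> gg G d x (u(e := a))) \<and>
     (\<forall>d<nDM G. hh G d \<in> borel_measurable borel) \<and>
     (\<forall>d<nDM G. (\<lambda>p. gg G d (fst p) (snd p)) \<in> borel_measurable borel) \<and>
     (\<forall>i<nPL G. (\<lambda>p. cc G i (fst p) (snd p)) \<in> borel_measurable borel)"

definition invertible_as :: "game \<Rightarrow> bool" where
  "invertible_as G \<longleftrightarrow>
     (\<forall>d<nDM G. \<forall>u. inj_on (\<lambda>x. gg G d x u) (hh G d ` set_pmf (dist G)))"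

definition invertible_all :: "game \<Rightarrow> bool" where
  "invertible_all G \<longleftrightarrow>
     (\<forall>d<nDM G. \<forall>u. inj_on (\<lambda>x. gg G d x u) (range (hh G d)))"

definition yhatD :: "game \<Rightarrow> (nat \<Rightarrow> real) \<Rightarrow> (nat \<Rightarrow> real) \<Rightarrow> nat \<Rightarrow> real" where
  "yhatD G \<zeta> u e = gg G e (hh G e \<zeta>) (\<lambda>e'. if e' \<in> dn G e then u e' else 0)"

definition obsD_of :: "game \<Rightarrow> (nat \<Rightarrow> real) \<Rightarrow> (nat \<Rightarrow> real) \<Rightarrow> nat \<Rightarrow> (nat \<Rightarrow> real)" where
  "obsD_of G \<zeta> u d = (\<lambda>e. if e \<in> oset G d then yhatD G \<zeta> u e else 0)"

primrec actsD :: "game \<Rightarrow> policy \<Rightarrow> (nat \<Rightarrow> real) \<Rightarrow> nat \<Rightarrow> (nat \<Rightarrow> real)" where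
  "actsD G \<gamma> \<zeta> 0 = (\<lambda>_. 0)"
| "actsD G \<gamma> \<zeta> (Suc m) =
     (actsD G \<gamma> \<zeta> m)(m := \<gamma> m (obsD_of G \<zeta> (actsD G \<gamma> \<zeta> m) m))"

definition actD :: "game \<Rightarrow> policy \<Rightarrow> (nat \<Rightarrow> real) \<Rightarrow> (nat \<Rightarrow> real)" where
  "actD G \<gamma> \<zeta> = actsD G \<gamma> \<zeta> (nDM G)"

definition obsD :: "game \<Rightarrow> policy \<Rightarrow> (nat \<Rightarrow> real) \<Rightarrow> nat \<Rightarrow> (nat \<Rightarrow> real)" where
  "obsD G \<gamma> \<zeta> d = obsD_of G \<zeta> (actD G \<gamma> \<zeta>) d"

definition obsS :: "game \<Rightarrow> policy \<Rightarrow> (nat \<Rightarrow> real) \<Rightarrow> nat \<Rightarrow> (nat \<Rightarrow> real)" where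
  "obsS G \<gamma> \<zeta> d = (\<lambda>e. if e \<in> oset G d then hh G e \<zeta> else 0)"

definition actS :: "game \<Rightarrow> policy \<Rightarrow> (nat \<Rightarrow> real) \<Rightarrow> (nat \<Rightarrow> real)" where
  "actS G \<gamma> \<zeta> = (\<lambda>d. if d < nDM G then \<gamma> d (obsS G \<gamma> \<zeta> d) else 0)"

definition related :: "game \<Rightarrow> policy \<Rightarrow> policy \<Rightarrow> bool" where
  "related G \<gamma>D \<gamma>S \<longleftrightarrow>
     (\<forall>d<nDM G. \<forall>\<zeta>\<in>set_pmf (dist G). \<gamma>S d (obsS G \<gamma>S \<zeta> d) = \<gamma>D d (obsD G \<gamma>D \<zeta> d))"

definition admissible :: "policy \<Rightarrow> bool" where
  "admissible \<gamma> \<longleftrightarrow> (\<forall>d. \<gamma> d \<in> borel_measurable borel)"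

definition cost :: "game \<Rightarrow> (policy \<Rightarrow> (nat \<Rightarrow> real) \<Rightarrow> (nat \<Rightarrow> real)) \<Rightarrow> policy \<Rightarrow> nat \<Rightarrow> real" where
  "cost G A \<gamma> i = measure_pmf.expectation (dist G) (\<lambda>\<zeta>. cc G i (\<zeta> 0) (A \<gamma> \<zeta>))"

definition PL_NE :: "game \<Rightarrow> (policy \<Rightarrow> (nat \<Rightarrow> real) \<Rightarrow> (nat \<Rightarrow> real)) \<Rightarrow> policy \<Rightarrow> bool" where
  "PL_NE G A \<gamma> \<longleftrightarrow> admissible \<gamma> \<and>
     (\<forall>i<nPL G. \<forall>\<gamma>'. admissible \<gamma>' \<and> (\<forall>d<nDM G. pl G d \<noteq> i \<longrightarrow> \<gamma>' d = \<gamma> d)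
        \<longrightarrow> cost G A \<gamma> i \<le> cost G A \<gamma>' i)"

definition DM_NE :: "game \<Rightarrow> (policy \<Rightarrow> (nat \<Rightarrow> real) \<Rightarrow> (nat \<Rightarrow> real)) \<Rightarrow> policy \<Rightarrow> bool" where
  "DM_NE G A \<gamma> \<longleftrightarrow> admissible \<gamma> \<and>
     (\<forall>d<nDM G. \<forall>\<beta>. \<beta> \<in> borel_measurable borel
        \<longrightarrow> cost G A \<gamma> (pl G d) \<le> cost G A (\<gamma>(d := \<beta>)) (pl G d))"

definition condcost ::
  "game \<Rightarrow> (policy \<Rightarrow> (nat \<Rightarrow> real) \<Rightarrow> (nat \<Rightarrow> real)) \<Rightarrow> (policy \<Rightarrow> (nat \<Rightarrow> real) \<Rightarrow> nat \<Rightarrow> (nat \<Rightarrow> real))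
    \<Rightarrow> policy \<Rightarrow> nat \<Rightarrow> (nat \<Rightarrow> real) \<Rightarrow> real \<Rightarrow> real" where
  "condcost G A Obs \<gamma> d y a =
     (\<Sum>\<zeta>\<in>{\<zeta>\<in>set_pmf (dist G). Obs \<gamma> \<zeta> d = y}.
         pmf (dist G) \<zeta> * cc G (pl G d) (\<zeta> 0) (A (\<gamma>(d := (\<lambda>_. a))) \<zeta>))
     / (\<Sum>\<zeta>\<in>{\<zeta>\<in>set_pmf (dist G). Obs \<gamma> \<zeta> d = y}. pmf (dist G) \<zeta>)"

definition stationary ::
  "game \<Rightarrow> (policy \<Rightarrow> (nat \<Rightarrow> real) \<Rightarrow> (nat \<Rightarrow> real)) \<Rightarrow> (policy \<Rightarrow> (nat \<Rightarrow> real) \<Rightarrow> nat \<Rightarrow> (nat \<Rightarrow> real))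
    \<Rightarrow> policy \<Rightarrow> bool" where
  "stationary G A Obs \<gamma> \<longleftrightarrow> admissible \<gamma> \<and>
     (\<forall>d<nDM G. \<forall>\<zeta>\<in>set_pmf (dist G).
        ((\<lambda>a. condcost G A Obs \<gamma> d (Obs \<gamma> \<zeta> d) a) has_real_derivative 0) (at (\<gamma> d (Obs \<gamma> \<zeta> d))))"

abbreviation "PL_NE_D G \<equiv> PL_NE G (actD G)"
abbreviation "PL_NE_S G \<equiv> PL_NE G (actS G)"
abbreviation "DM_NE_D G \<equiv> DM_NE G (actD G)"
abbreviation "DM_NE_S G \<equiv> DM_NE G (actS G)"
abbreviation "stationary_D G \<equiv> stationary G (actD G) (obsD G)"
abbreviation "stationary_S G \<equiv> stationary G (actS G) (obsS G)"

definition smooth_convex_costs :: "game \<Rightarrow> bool" where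
  "smooth_convex_costs G \<longleftrightarrow>
     (\<forall>i<nPL G. \<forall>w.
        (\<exists>D :: (nat \<Rightarrow> real) \<Rightarrow> nat \<Rightarrow> real.
           (\<forall>u. \<forall>e<nDM G. ((\<lambda>a. cc G i w (u(e := a))) has_real_derivative D u e) (at (u e))) \<and>
           (\<forall>e<nDM G. continuous_on UNIV (\<lambda>u. D u e))) \<and>
        (\<forall>u v t. 0 \<le> t \<and> t \<le> 1 \<longrightarrow>
           cc G i w (\<lambda>e. t * u e + (1 - t) * v e) \<le> t * cc G i w u + (1 - t) * cc G i w v))"

definition affine_fun :: "((nat \<Rightarrow> real) \<Rightarrow> real) \<Rightarrow> bool" where
  "affine_fun f \<longleftrightarrow> (\<forall>u v t. f (\<lambda>e. t * u e + (1 - t) * v e) = t * f u + (1 - t) * f v)"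

definition condition_C :: "game \<Rightarrow> policy \<Rightarrow> bool" where
  "condition_C G \<gamma> \<longleftrightarrow> (\<forall>d<nDM G. \<forall>\<zeta>. affine_fun (\<lambda>u. \<gamma> d (obsD_of G \<zeta> u d)))"

end

theory Submission
  imports Defs
begin

definition GG :: "(nat \<Rightarrow> real \<Rightarrow> (nat \<Rightarrow> real) \<Rightarrow> real) \<Rightarrow> game" where
  "GG c = \<lparr>nDM = 2, nPL = 2, pl = id, dn = (\<lambda>d. if d = 1 then {0} else {}),
     hh = (\<lambda>_ _. 0), gg = (\<lambda>d x u. if d = 1 then x + u 0 else x), cc = c,
     dist = return_pmf (\<lambda>_. 0)\<rparr>"

definition c1 :: "nat \<Rightarrow> real \<Rightarrow> (nat \<Rightarrow> real) \<Rightarrow> real" where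
  "c1 i w u = (if i = 0 then (u 0 - u 1 - 1)^2 else 0)"
definition c2 :: "nat \<Rightarrow> real \<Rightarrow> (nat \<Rightarrow> real) \<Rightarrow> real" where
  "c2 i w u = (if i = 0 then (u 1 - 1)^2 else 0)"

definition gD :: policy where "gD = (\<lambda>d y. if d = 1 then y 1 else 0)"
definition gS :: policy where "gS = (\<lambda>d y. 0)"

lemma cont_snd_coord: "continuous_on UNIV (\<lambda>p::'a::topological_space \<times> (nat \<Rightarrow> real). snd p i)"
  by (rule continuous_on_product_then_coordinatewise[OF continuous_on_snd[OF continuous_on_id]])

lemma meas_snd: "(\<lambda>p::'a::topological_space \<times> (nat \<Rightarrow> real). snd p i) \<in> borel_measurable borel"
  by (rule borel_measurable_continuous_onI[OF cont_snd_coord])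

lemma meas_coord: "(\<lambda>y::nat \<Rightarrow> real. y i) \<in> borel_measurable borel"
  by (rule borel_measurable_continuous_onI) simp

lemma adm_gD: "admissible gD"
  unfolding admissible_def gD_def using meas_coord by auto
lemma adm_gS: "admissible gS"
  unfolding admissible_def gS_def by auto

lemma wf: "(c = c1 \<or> c = c2) \<Longrightarrow> well_formed (GG c)"
  unfolding well_formed_def
proof (intro conjI)
  assume c: "c = c1 \<or> c = c2"
  show "\<forall>i<nPL (GG c). (\<lambda>p. cc (GG c) i (fst p) (snd p)) \<in> borel_measurable borel"
  proof (intro allI impI)
    fix i
    show "(\<lambda>p. cc (GG c) i (fst p) (snd p)) \<in> borel_measurable borel"
      using c by (cases "i = 0") (auto simp: GG_def c1_def c2_def
         intro!: borel_measurable_continuous_onI continuous_intros cont_snd_coord)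
  qed
  show "\<forall>d<nDM (GG c). (\<lambda>p. gg (GG c) d (fst p) (snd p)) \<in> borel_measurable borel"
  proof (intro allI impI)
    fix d
    show "(\<lambda>p. gg (GG c) d (fst p) (snd p)) \<in> borel_measurable borel"
      by (cases "d = 1") (auto simp: GG_def
         intro!: borel_measurable_continuous_onI continuous_intros cont_snd_coord)
  qed
  show "\<forall>d<nDM (GG c). \<forall>e\<in>dn (GG c) d. \<exists>x u a. gg (GG c) d x u \<noteq> gg (GG c) d x (u(e := a))"
    by (auto simp: GG_def intro!: exI[of _ "\<lambda>_. 0"] exI[of _ 1])
qed (auto simp: GG_def)

lemma inv_all: "invertible_all (GG c)"
  unfolding invertible_all_def by (auto simp: GG_def inj_on_def)
lemma inv_as: "invertible_as (GG c)"
  unfolding invertible_as_def by (auto simp: GG_def inj_on_def)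

lemma cost_GG: "cost (GG c) A \<gamma> i = c i 0 (A \<gamma> (\<lambda>_. 0))"
  by (simp add: cost_def GG_def)

lemma condcost_GG: "condcost (GG c) A Obs \<gamma> d (Obs \<gamma> (\<lambda>_. 0) d) a = c (pl (GG c) d) 0 (A (\<gamma>(d := (\<lambda>_. a))) (\<lambda>_. 0))"
proof -
  have "{\<zeta>\<in>set_pmf (dist (GG c)). Obs \<gamma> \<zeta> d = Obs \<gamma> (\<lambda>_. 0) d} = {\<lambda>_. 0}"
    by (auto simp: GG_def)
  then show ?thesis by (simp add: condcost_def GG_def)
qed

lemma actD0: "actD (GG c) \<gamma> \<zeta> 0 = \<gamma> 0 (obsD_of (GG c) \<zeta> (\<lambda>_. 0) 0)"
  by (simp add: actD_def GG_def numeral_2_eq_2)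

lemma actD1: "\<gamma> (Suc 0) = (\<lambda>y. y (Suc 0)) \<Longrightarrow> actD (GG c) \<gamma> \<zeta> (Suc 0) = actD (GG c) \<gamma> \<zeta> 0"
  by (simp add: actD_def GG_def numeral_2_eq_2 obsD_of_def oset_def yhatD_def)

lemma actS0: "actS (GG c) \<gamma> \<zeta> 0 = \<gamma> 0 (obsS (GG c) \<gamma> \<zeta> 0)"
  by (simp add: actS_def GG_def)
lemma actS1: "actS (GG c) \<gamma> \<zeta> (Suc 0) = \<gamma> (Suc 0) (obsS (GG c) \<gamma> \<zeta> (Suc 0))"
  by (simp add: actS_def GG_def)

lemma related: "related (GG c) gD gS"
  unfolding related_def
  by (auto simp: GG_def gD_def gS_def less_2_cases_iff obsD_def obsD_of_def oset_def yhatD_def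
     actD_def numeral_2_eq_2)

lemma GG_simps[simp]: "nDM (GG c) = 2" "nPL (GG c) = 2" "pl (GG c) d = d"
  by (simp_all add: GG_def)

lemma cost_c1_D0: "\<gamma> (Suc 0) = (\<lambda>y. y (Suc 0)) \<Longrightarrow> cost (GG c1) (actD (GG c1)) \<gamma> 0 = 1"
  by (simp add: cost_GG c1_def actD1)

lemma setpmf: "\<zeta> \<in> set_pmf (dist (GG c)) \<Longrightarrow> \<zeta> = (\<lambda>_. 0)"
  by (simp add: GG_def)

lemma gD1: "gD (Suc 0) = (\<lambda>y. y (Suc 0))" by (simp add: gD_def fun_eq_iff)

lemma D1_PL: "PL_NE_D (GG c1) gD"
  unfolding PL_NE_def
proof (intro conjI allI impI adm_gD)
  fix i \<gamma>' assume i: "i < nPL (GG c1)" and h: "admissible \<gamma>' \<and> (\<forall>d<nDM (GG c1). pl (GG c1) d \<noteq> i \<longrightarrow> \<gamma>' d = gD d)"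
  show "cost (GG c1) (actD (GG c1)) gD i \<le> cost (GG c1) (actD (GG c1)) \<gamma>' i"
  proof (cases "i = 0")
    case True
    then have "\<gamma>' (Suc 0) = (\<lambda>y. y (Suc 0))" using h gD1 by auto
    then show ?thesis using True cost_c1_D0[of gD, OF gD1] cost_c1_D0 by simp
  next
    case False then show ?thesis by (simp add: cost_GG c1_def)
  qed
qed

lemma D1_DM: "DM_NE_D (GG c1) gD"
  unfolding DM_NE_def
proof (intro conjI allI impI adm_gD)
  fix d \<beta> assume d: "d < nDM (GG c1)"
  show "cost (GG c1) (actD (GG c1)) gD (pl (GG c1) d) \<le> cost (GG c1) (actD (GG c1)) (gD(d := \<beta>)) (pl (GG c1) d)"
  proof (cases "d = 0")
    case True
    then have "(gD(d := \<beta>)) (Suc 0) = (\<lambda>y. y (Suc 0))" using gD1 by auto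
    then show ?thesis using True cost_c1_D0[of gD, OF gD1] cost_c1_D0 by simp
  next
    case False then show ?thesis by (simp add: cost_GG c1_def)
  qed
qed

lemma D1_stat: "stationary_D (GG c1) gD"
  unfolding stationary_def
proof (intro conjI allI impI ballI adm_gD)
  fix d \<zeta> assume d: "d < nDM (GG c1)" and z: "\<zeta> \<in> set_pmf (dist (GG c1))"
  from z have z0: "\<zeta> = (\<lambda>_. 0)" by (rule setpmf)
  have "(\<lambda>a. condcost (GG c1) (actD (GG c1)) (obsD (GG c1)) gD d (obsD (GG c1) gD \<zeta> d) a) = (\<lambda>a. if d = 0 then 1 else 0)"
  proof
    fix a
    have "(gD(d := (\<lambda>_. a))) (Suc 0) = (\<lambda>y. y (Suc 0))" if "d = 0" using gD1 that by auto
    then show "condcost (GG c1) (actD (GG c1)) (obsD (GG c1)) gD d (obsD (GG c1) gD \<zeta> d) a = (if d = 0 then 1 else 0)"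
      unfolding z0 condcost_GG by (auto simp: c1_def actD1)
  qed
  then show "((\<lambda>a. condcost (GG c1) (actD (GG c1)) (obsD (GG c1)) gD d (obsD (GG c1) gD \<zeta> d) a) has_real_derivative 0) (at (gD d (obsD (GG c1) gD \<zeta> d)))"
    by simp
qed

lemma S1_notPL: "\<not> PL_NE_S (GG c1) gS"
proof
  assume a: "PL_NE_S (GG c1) gS"
  have "admissible (gS(0 := (\<lambda>_. 1)))" by (auto simp: admissible_def gS_def)
  then have "cost (GG c1) (actS (GG c1)) gS 0 \<le> cost (GG c1) (actS (GG c1)) (gS(0 := (\<lambda>_. 1))) 0"
    using a unfolding PL_NE_def by auto
  then show False by (simp add: cost_GG c1_def actS0 actS1 gS_def)
qed

lemma S1_notDM: "\<not> DM_NE_S (GG c1) gS"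
proof
  assume a: "DM_NE_S (GG c1) gS"
  have "cost (GG c1) (actS (GG c1)) gS 0 \<le> cost (GG c1) (actS (GG c1)) (gS(0 := (\<lambda>_. 1))) 0"
    using a unfolding DM_NE_def by (metis GG_simps(1,3) borel_measurable_const zero_less_numeral)
  then show False by (simp add: cost_GG c1_def actS0 actS1 gS_def)
qed

lemma S1_notstat: "\<not> stationary_S (GG c1) gS"
proof
  assume a: "stationary_S (GG c1) gS"
  let ?f = "\<lambda>a. condcost (GG c1) (actS (GG c1)) (obsS (GG c1)) gS 0 (obsS (GG c1) gS (\<lambda>_. 0) 0) a"
  have "(?f has_real_derivative 0) (at (gS 0 (obsS (GG c1) gS (\<lambda>_. 0) 0)))"
    using a unfolding stationary_def by (auto simp: GG_def)
  moreover have "?f = (\<lambda>a. (a - 1)^2)"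
    by (rule ext) (simp add: condcost_GG c1_def actS0 actS1 gS_def)
  moreover have "((\<lambda>a::real. (a - 1)^2) has_real_derivative -2) (at 0)"
    by (auto intro!: derivative_eq_intros)
  ultimately show False using DERIV_unique by (fastforce simp: gS_def)
qed


lemma S2_PL: "PL_NE_S (GG c2) gS"
  unfolding PL_NE_def
proof (intro conjI allI impI adm_gS)
  fix i \<gamma>' assume i: "i < nPL (GG c2)" and h: "admissible \<gamma>' \<and> (\<forall>d<nDM (GG c2). pl (GG c2) d \<noteq> i \<longrightarrow> \<gamma>' d = gS d)"
  show "cost (GG c2) (actS (GG c2)) gS i \<le> cost (GG c2) (actS (GG c2)) \<gamma>' i"
  proof (cases "i = 0")
    case True
    then have "\<gamma>' (Suc 0) = gS (Suc 0)" using h by auto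
    then show ?thesis using True by (simp add: cost_GG c2_def actS1 gS_def)
  next
    case False then show ?thesis by (simp add: cost_GG c2_def)
  qed
qed

lemma S2_DM: "DM_NE_S (GG c2) gS"
  unfolding DM_NE_def
proof (intro conjI allI impI adm_gS)
  fix d \<beta> assume d: "d < nDM (GG c2)"
  show "cost (GG c2) (actS (GG c2)) gS (pl (GG c2) d) \<le> cost (GG c2) (actS (GG c2)) (gS(d := \<beta>)) (pl (GG c2) d)"
    by (cases "d = 0") (simp_all add: cost_GG c2_def actS1 gS_def)
qed

lemma S2_stat: "stationary_S (GG c2) gS"
  unfolding stationary_def
proof (intro conjI allI impI ballI adm_gS)
  fix d \<zeta> assume d: "d < nDM (GG c2)" and z: "\<zeta> \<in> set_pmf (dist (GG c2))"
  from z have z0: "\<zeta> = (\<lambda>_. 0)" by (rule setpmf)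
  have "(\<lambda>a. condcost (GG c2) (actS (GG c2)) (obsS (GG c2)) gS d (obsS (GG c2) gS \<zeta> d) a) = (\<lambda>a. if d = 0 then 1 else 0)"
  proof
    fix a
    show "condcost (GG c2) (actS (GG c2)) (obsS (GG c2)) gS d (obsS (GG c2) gS \<zeta> d) a = (if d = 0 then 1 else 0)"
      unfolding z0 condcost_GG by (auto simp: c2_def actS1 gS_def)
  qed
  then show "((\<lambda>a. condcost (GG c2) (actS (GG c2)) (obsS (GG c2)) gS d (obsS (GG c2) gS \<zeta> d) a) has_real_derivative 0) (at (gS d (obsS (GG c2) gS \<zeta> d)))"
    by simp
qed

lemma actD0_gD: "actD (GG c) (gD(0 := (\<lambda>_. a))) \<zeta> 0 = a"
  by (simp add: actD0)

lemma actD0_gD': "actD (GG c) gD \<zeta> 0 = 0"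
  by (simp add: actD0 gD_def)

lemma D2_notPL: "\<not> PL_NE_D (GG c2) gD"
proof
  assume a: "PL_NE_D (GG c2) gD"
  have "admissible (gD(0 := (\<lambda>_. 1)))" using adm_gD by (auto simp: admissible_def)
  then have "cost (GG c2) (actD (GG c2)) gD 0 \<le> cost (GG c2) (actD (GG c2)) (gD(0 := (\<lambda>_. 1))) 0"
    using a unfolding PL_NE_def by auto
  moreover have "(gD(0 := (\<lambda>_. 1))) (Suc 0) = (\<lambda>y. y (Suc 0))" using gD1 by simp
  ultimately show False
    by (simp add: cost_GG c2_def actD1 gD1 actD0_gD actD0_gD' del: fun_upd_apply)
qed

lemma D2_notDM: "\<not> DM_NE_D (GG c2) gD"
proof
  assume a: "DM_NE_D (GG c2) gD"
  have "cost (GG c2) (actD (GG c2)) gD 0 \<le> cost (GG c2) (actD (GG c2)) (gD(0 := (\<lambda>_. 1))) 0"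
    using a unfolding DM_NE_def by (metis GG_simps(1,3) borel_measurable_const zero_less_numeral)
  moreover have "(gD(0 := (\<lambda>_. 1))) (Suc 0) = (\<lambda>y. y (Suc 0))" using gD1 by simp
  ultimately show False
    by (simp add: cost_GG c2_def actD1 gD1 actD0_gD actD0_gD' del: fun_upd_apply)
qed

lemma D2_notstat: "\<not> stationary_D (GG c2) gD"
proof
  assume a: "stationary_D (GG c2) gD"
  let ?f = "\<lambda>a. condcost (GG c2) (actD (GG c2)) (obsD (GG c2)) gD 0 (obsD (GG c2) gD (\<lambda>_. 0) 0) a"
  have "(?f has_real_derivative 0) (at (gD 0 (obsD (GG c2) gD (\<lambda>_. 0) 0)))"
    using a unfolding stationary_def by (auto simp: GG_def)
  moreover have "?f = (\<lambda>a. (a - 1)^2)"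
  proof
    fix a
    have "(gD(0 := (\<lambda>_. a))) (Suc 0) = (\<lambda>y. y (Suc 0))" using gD1 by simp
    then show "?f a = (a - 1)^2"
      by (simp add: condcost_GG c2_def actD1 actD0_gD del: fun_upd_apply)
  qed
  moreover have "((\<lambda>a::real. (a - 1)^2) has_real_derivative -2) (at 0)"
    by (auto intro!: derivative_eq_intros)
  ultimately show False using DERIV_unique by (fastforce simp: gD_def)
qed

lemma condC: "condition_C (GG c1) gD"
  unfolding condition_C_def affine_fun_def
  by (auto simp: less_2_cases_iff gD_def obsD_of_def oset_def yhatD_def GG_def algebra_simps)

lemma sq_convex: "(t * a + (1 - t) * b)^2 \<le> t * a^2 + (1 - t) * (b::real)^2" if "0 \<le> t" "t \<le> 1"
proof -
  have "t * a^2 + (1 - t) * b^2 - (t * a + (1 - t) * b)^2 = t * (1 - t) * (a - b)^2"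
    by (simp add: power2_eq_square algebra_simps)
  moreover have "t * (1 - t) * (a - b)^2 \<ge> 0" using that by simp
  ultimately show ?thesis by linarith
qed

lemma smooth: "smooth_convex_costs (GG c1)"
  unfolding smooth_convex_costs_def
proof (intro allI impI, rule conjI)
  fix i w assume i: "i < nPL (GG c1)"
  define D :: "(nat \<Rightarrow> real) \<Rightarrow> nat \<Rightarrow> real" where "D = (\<lambda>u e. if i = 0 then (if e = 0 then 2 * (u 0 - u 1 - 1)
        else if e = 1 then - 2 * (u 0 - u 1 - 1) else 0) else 0)"
  show "\<exists>D :: (nat \<Rightarrow> real) \<Rightarrow> nat \<Rightarrow> real.
           (\<forall>u. \<forall>e<nDM (GG c1). ((\<lambda>a. cc (GG c1) i w (u(e := a))) has_real_derivative D u e) (at (u e))) \<and>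
           (\<forall>e<nDM (GG c1). continuous_on UNIV (\<lambda>u. D u e))"
  proof (rule exI[of _ D], intro conjI allI impI)
    fix u :: "nat \<Rightarrow> real" and e assume e: "e < nDM (GG c1)"
    show "((\<lambda>a. cc (GG c1) i w (u(e := a))) has_real_derivative D u e) (at (u e))"
      using e by (cases "i = 0") (auto simp: less_2_cases_iff D_def GG_def c1_def intro!: derivative_eq_intros)
  next
    fix e assume e: "e < nDM (GG c1)"
    show "continuous_on UNIV (\<lambda>u. D u e)"
      unfolding D_def by (cases "i = 0"; cases "e = 0"; cases "e = 1") (auto intro!: continuous_intros)
  qed
  show "\<forall>u v t. 0 \<le> t \<and> t \<le> 1 \<longrightarrow>
           cc (GG c1) i w (\<lambda>e. t * u e + (1 - t) * v e) \<le> t * cc (GG c1) i w u + (1 - t) * cc (GG c1) i w v"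
  proof (intro allI impI)
    fix u v :: "nat \<Rightarrow> real" and t :: real assume t: "0 \<le> t \<and> t \<le> 1"
    have "t * u 0 + (1 - t) * v 0 - (t * u 1 + (1 - t) * v 1) - 1 = t * (u 0 - u 1 - 1) + (1 - t) * (v 0 - v 1 - 1)"
      by (simp add: algebra_simps)
    then show "cc (GG c1) i w (\<lambda>e. t * u e + (1 - t) * v e) \<le> t * cc (GG c1) i w u + (1 - t) * cc (GG c1) i w v"
      using t sq_convex[of t "u 0 - u 1 - 1" "v 0 - v 1 - 1"] by (simp add: GG_def c1_def del: One_nat_def)
  qed
qed

theorem proposition3p1:
  shows
  "(\<exists>G \<gamma>D \<gamma>S. well_formed G \<and> invertible_as G \<and> PL_NE_D G \<gamma>D \<and> admissible \<gamma>S \<and>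
       related G \<gamma>D \<gamma>S \<and> \<not> PL_NE_S G \<gamma>S) \<and>
   (\<exists>G \<gamma>D \<gamma>S. well_formed G \<and> invertible_as G \<and> DM_NE_D G \<gamma>D \<and> admissible \<gamma>S \<and>
       related G \<gamma>D \<gamma>S \<and> \<not> DM_NE_S G \<gamma>S) \<and>
   (\<exists>G \<gamma>D \<gamma>S. well_formed G \<and> invertible_as G \<and> stationary_D G \<gamma>D \<and> admissible \<gamma>S \<and>
       related G \<gamma>D \<gamma>S \<and> \<not> stationary_S G \<gamma>S) \<and>
   (\<exists>G \<gamma>S \<gamma>D. well_formed G \<and> invertible_as G \<and> PL_NE_S G \<gamma>S \<and> admissible \<gamma>D \<and>
       related G \<gamma>D \<gamma>S \<and> \<not> PL_NE_D G \<gamma>D) \<and>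
   (\<exists>G \<gamma>S \<gamma>D. well_formed G \<and> invertible_as G \<and> DM_NE_S G \<gamma>S \<and> admissible \<gamma>D \<and>
       related G \<gamma>D \<gamma>S \<and> \<not> DM_NE_D G \<gamma>D) \<and>
   (\<exists>G \<gamma>S \<gamma>D. well_formed G \<and> invertible_as G \<and> stationary_S G \<gamma>S \<and> admissible \<gamma>D \<and>
       related G \<gamma>D \<gamma>S \<and> \<not> stationary_D G \<gamma>D) \<and>
   (\<exists>G \<gamma>D \<gamma>S. well_formed G \<and> invertible_all G \<and> smooth_convex_costs G \<and> condition_C G \<gamma>D \<and>
       PL_NE_D G \<gamma>D \<and> admissible \<gamma>S \<and> related G \<gamma>D \<gamma>S \<and> \<not> PL_NE_S G \<gamma>S) \<and>
   (\<exists>G \<gamma>D \<gamma>S. well_formed G \<and> invertible_all G \<and> smooth_convex_costs G \<and> condition_C G \<gamma>D \<and>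
       DM_NE_D G \<gamma>D \<and> admissible \<gamma>S \<and> related G \<gamma>D \<gamma>S \<and> \<not> DM_NE_S G \<gamma>S) \<and>
   (\<exists>G \<gamma>D \<gamma>S. well_formed G \<and> invertible_all G \<and> smooth_convex_costs G \<and> condition_C G \<gamma>D \<and>
       stationary_D G \<gamma>D \<and> admissible \<gamma>S \<and> related G \<gamma>D \<gamma>S \<and> \<not> stationary_S G \<gamma>S)"
proof -
  have w1: "well_formed (GG c1)" and w2: "well_formed (GG c2)" by (auto intro: wf)
  show ?thesis
    using w1 w2 inv_as inv_all smooth condC related adm_gD adm_gS
      D1_PL D1_DM D1_stat S1_notPL S1_notDM S1_notstat S2_PL S2_DM S2_stat D2_notPL D2_notDM D2_notstat
    by blast
qed

end
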